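(* Let $\varphi\neq0$ and $\phi$ be real numbers and $$M_A=\begin{pmatrix} i\cosh\varphi & e^{i\phi}\sinh\varphi\\ e^{-i\phi}\sinh\varphi & -i\cosh\varphi\end{pmatrix},\qquad M_B=\begin{pmatrix} i&0\\0&-i\end{pmatrix}.$$ Let $M_1,M_2,\dots$ be independent random matrices, each equal to $M_A$ or $M_B$ with probability $1/2$, and let $\Pi_n=M_1\cdots M_n$. Then the Lyapunov exponent vanishes: $$\lambda_L=\lim_{n\to\infty}\frac1n\mathbb{E}\left(\log\|\Pi_n\|_F\right)=0.$$
   Context: $\|\cdot\|_F$ is the Frobenius norm, $\|M\|_F=(\sum_{i,j}|M_{ij}|^2)^{1/2}$. $\mathbb{E}$ denotes expectation over the random choices of $M_1,\dots,M_n$. *)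

theory Defs
  imports "HOL-Analysis.Analysis"
begin

definition frob :: "complex^2^2 \<Rightarrow> real" where
  "frob M = sqrt (\<Sum>i\<in>UNIV. \<Sum>j\<in>UNIV. (cmod (M $ i $ j))\<^sup>2)"

definition MA :: "real \<Rightarrow> real \<Rightarrow> complex^2^2" where
  "MA \<phi>h \<phi> = (\<chi> i j.
     if i = 1 \<and> j = 1 then \<i> * of_real (cosh \<phi>h)
     else if i = 1 \<and> j = 2 then cis \<phi> * of_real (sinh \<phi>h)
     else if i = 2 \<and> j = 1 then cis (- \<phi>) * of_real (sinh \<phi>h)
     else - \<i> * of_real (cosh \<phi>h))"

definition MB :: "complex^2^2" where
  "MB = (\<chi> i j. if i = 1 \<and> j = 1 then \<i> else if i = 2 \<and> j = 2 then - \<i> else 0)"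

text \<open>Product M_1 ... M_n for a choice sequence (True = M_A, False = M_B), M_1 = head.\<close>
definition prodM :: "real \<Rightarrow> real \<Rightarrow> bool list \<Rightarrow> complex^2^2" where
  "prodM \<phi>h \<phi> xs = foldr (\<lambda>b P. (if b then MA \<phi>h \<phi> else MB) ** P) xs (mat 1)"

text \<open>Expectation of log of the Frobenius norm of the product over n i.i.d. fair choices:
  uniform average over all 2^n choice sequences of length n.\<close>
definition Elog :: "real \<Rightarrow> real \<Rightarrow> nat \<Rightarrow> real" where
  "Elog \<phi>h \<phi> n = (\<Sum>xs\<in>{xs::bool list. length xs = n}. ln (frob (prodM \<phi>h \<phi> xs))) / 2 ^ n"

end

theory Submission
  imports Defs "HOL-Real_Asymp.Real_Asymp"
begin

lemma fin_len: "finite {xs::bool list. length xs = n}"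
  using finite_lists_length_eq[of "UNIV::bool set" n] by simp

lemma sum_len_Suc:
  "(\<Sum>xs\<in>{xs::bool list. length xs = Suc n}. f xs) =
   (\<Sum>xs\<in>{xs::bool list. length xs = n}. f (True#xs) + f (False#xs))"
proof -
  have e: "{xs::bool list. length xs = Suc n} = (\<lambda>(xs, b). b#xs) ` ({xs. length xs = n} \<times> UNIV)"
    using lists_length_Suc_eq[of "UNIV::bool set" n] by simp
  have "(\<Sum>xs\<in>{xs::bool list. length xs = Suc n}. f xs) =
     (\<Sum>(xs,b)\<in>{xs::bool list. length xs = n} \<times> UNIV. f (b # xs))"
    unfolding e by (subst sum.reindex) (auto simp: inj_split_Cons intro!: sum.cong)
  also have "\<dots> = (\<Sum>xs\<in>{xs::bool list. length xs = n}. \<Sum>b\<in>UNIV. f (b#xs))"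
    by (rule sum.cartesian_product[symmetric])
  also have "\<dots> = (\<Sum>xs\<in>{xs::bool list. length xs = n}. f (True#xs) + f (False#xs))"
    by (simp add: UNIV_bool add.commute)
  finally show ?thesis .
qed

lemma card_len: "card {xs::bool list. length xs = n} = 2 ^ n"
  using card_lists_length_eq[of "UNIV::bool set" n] by simp

fun st :: "bool list \<Rightarrow> bool \<times> nat" where
  "st [] = (True, 0)"
| "st (b#xs) = (case st xs of (f, l) \<Rightarrow>
     if l = 0 then (b, 1) else if b = f then (\<not> f, l - 1) else (b, l + 1))"

definition len :: "bool list \<Rightarrow> nat" where "len xs = snd (st xs)"

lemma len_sq_step:
  "real (len (True#xs))^2 + real (len (False#xs))^2 = 2 * (real (len xs)^2 + 1)"
proof -
  obtain f l where s: "st xs = (f, l)" by fastforce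
  show ?thesis
  proof (cases "l = 0")
    case True then show ?thesis by (simp add: len_def s)
  next
    case False
    then have "real (l - 1) = real l - 1" by simp
    with False show ?thesis by (cases f) (auto simp add: len_def s power2_eq_square algebra_simps)
  qed
qed

lemma sum_len_sq: "(\<Sum>xs\<in>{xs::bool list. length xs = n}. real (len xs)^2) = real n * 2 ^ n"
proof (induction n)
  case 0
  have "{xs::bool list. length xs = 0} = {[]}" by auto
  then show ?case by (simp add: len_def)
next
  case (Suc n)
  have "(\<Sum>xs\<in>{xs::bool list. length xs = Suc n}. real (len xs)^2) =
     (\<Sum>xs\<in>{xs::bool list. length xs = n}. 2 * (real (len xs)^2 + 1))"
    by (simp add: sum_len_Suc len_sq_step)
  also have "\<dots> = 2 * (\<Sum>xs\<in>{xs::bool list. length xs = n}. real (len xs)^2) + 2 * 2 ^ n"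
    by (simp add: sum.distrib sum_distrib_left card_len)
  finally show ?case using Suc by (simp add: algebra_simps)
qed

definition Mb :: "real \<Rightarrow> real \<Rightarrow> bool \<Rightarrow> complex^2^2" where
  "Mb a p b = (if b then MA a p else MB)"

fun alt :: "real \<Rightarrow> real \<Rightarrow> bool \<Rightarrow> nat \<Rightarrow> complex^2^2" where
  "alt a p f 0 = mat 1"
| "alt a p f (Suc n) = Mb a p f ** alt a p (\<not> f) n"

lemma cis_cnj: "cis p * cis (- p) = 1"
  by (simp add: cis_mult)

lemma sqA: "MA a p ** MA a p = - mat 1"
proof -
  have h: "(cosh a)^2 - (sinh a)^2 = 1" by (simp add: cosh_square_eq)
  have h2: "complex_of_real (cosh a) * complex_of_real (cosh a) - complex_of_real (sinh a) * complex_of_real (sinh a) = 1"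
    using arg_cong[OF h, of complex_of_real] by (simp add: power2_eq_square)
  show ?thesis
    unfolding MA_def
    apply (simp add: vec_eq_iff matrix_matrix_mult_def sum_2 forall_2 mat_def)
    using h2 cis_cnj[of p]
    apply (auto simp: algebra_simps)
    done
qed

lemma sqB: "MB ** MB = - mat 1"
  unfolding MB_def by (simp add: vec_eq_iff matrix_matrix_mult_def sum_2 forall_2 mat_def)

lemma sqM: "Mb a p b ** Mb a p b = - mat 1"
  by (simp add: Mb_def sqA sqB)

lemma mul_neg: "(A::complex^2^2) ** (- B) = - (A ** B)"
  by (simp add: vec_eq_iff matrix_matrix_mult_def sum_negf)

lemma neg_mul: "(- A::complex^2^2) ** B = - (A ** B)"
  by (simp add: vec_eq_iff matrix_matrix_mult_def sum_negf)

lemma prodM_Cons: "prodM a p (b#xs) = Mb a p b ** prodM a p xs"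
  by (simp add: prodM_def Mb_def)

lemma prodM_alt:
  "prodM a p xs = alt a p (fst (st xs)) (snd (st xs)) \<or> prodM a p xs = - alt a p (fst (st xs)) (snd (st xs))"
proof (induction xs)
  case Nil
  then show ?case by (simp add: prodM_def)
next
  case (Cons b xs)
  obtain f l where s: "st xs = (f, l)" by fastforce
  have key: "Mb a p b ** alt a p f l = alt a p (fst (st (b#xs))) (snd (st (b#xs))) \<or>
             Mb a p b ** alt a p f l = - alt a p (fst (st (b#xs))) (snd (st (b#xs)))"
  proof (cases l)
    case 0
    then show ?thesis by (simp add: s)
  next
    case (Suc m)
    show ?thesis
    proof (cases "b = f")
      case True
      then have "Mb a p b ** alt a p f l = - alt a p (\<not> f) m"
      proof -
        have "Mb a p f ** (Mb a p f ** alt a p (\<not> f) m) = (Mb a p f ** Mb a p f) ** alt a p (\<not> f) m"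
          by (simp add: matrix_mul_assoc)
        also have "\<dots> = - alt a p (\<not> f) m" by (simp add: sqM neg_mul matrix_mul_lid)
        finally show ?thesis using Suc True by simp
      qed
      then show ?thesis using Suc True by (simp add: s)
    next
      case False
      then have "f = (\<not> b)" by auto
      then show ?thesis using Suc False by (simp add: s)
    qed
  qed
  from Cons.IH show ?case
    unfolding prodM_Cons s using key by (auto simp: mul_neg)
qed

definition l1 :: "complex^2^2 \<Rightarrow> real" where
  "l1 M = (\<Sum>i\<in>UNIV. \<Sum>j\<in>UNIV. cmod (M $ i $ j))"

lemma l1_nonneg: "0 \<le> l1 M"
  by (simp add: l1_def sum_nonneg)

lemma real_aux:
  fixes x11 x12 x21 x22 y11 y12 y21 y22 :: real
  assumes "0 \<le> x11" "0 \<le> x12" "0 \<le> x21" "0 \<le> x22" "0 \<le> y11" "0 \<le> y12" "0 \<le> y21" "0 \<le> y22"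
  shows "x11*y11 + x12*y21 + (x11*y12 + x12*y22) + (x21*y11 + x22*y21) + (x21*y12 + x22*y22)
     \<le> (x11 + x12 + (x21 + x22)) * (y11 + y12 + (y21 + y22))"
proof -
  have "(x11 + x12 + (x21 + x22)) * (y11 + y12 + (y21 + y22)) =
     (x11*y11 + x12*y21) + (x11*y12 + x12*y22) + (x21*y11 + x22*y21) + (x21*y12 + x22*y22)
     + (x11*y21 + x11*y22 + x12*y11 + x12*y12 + x21*y21 + x21*y22 + x22*y11 + x22*y12)"
    by (simp add: algebra_simps)
  moreover have "0 \<le> x11*y21 + x11*y22 + x12*y11 + x12*y12 + x21*y21 + x21*y22 + x22*y11 + x22*y12"
    using assms by (simp add: add_nonneg_nonneg)
  ultimately show ?thesis by linarith
qed

lemma tri: "cmod (a * b + c * d) \<le> cmod a * cmod b + cmod c * cmod d"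
  by (metis norm_mult norm_triangle_ineq)

lemma l1_mult: "l1 (A ** B) \<le> l1 A * l1 B"
proof -
  have "l1 (A ** B) \<le> (cmod (A$1$1)*cmod (B$1$1) + cmod (A$1$2)*cmod (B$2$1)) + (cmod (A$1$1)*cmod (B$1$2) + cmod (A$1$2)*cmod (B$2$2))
      + (cmod (A$2$1)*cmod (B$1$1) + cmod (A$2$2)*cmod (B$2$1)) + (cmod (A$2$1)*cmod (B$1$2) + cmod (A$2$2)*cmod (B$2$2))"
    unfolding l1_def using tri[of "A$1$1" "B$1$1" "A$1$2" "B$2$1"] tri[of "A$1$1" "B$1$2" "A$1$2" "B$2$2"]
      tri[of "A$2$1" "B$1$1" "A$2$2" "B$2$1"] tri[of "A$2$1" "B$1$2" "A$2$2" "B$2$2"]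
    by (simp add: matrix_matrix_mult_def sum_2)
  also have "\<dots> \<le> l1 A * l1 B"
    unfolding l1_def sum_2 by (rule real_aux) auto
  finally show ?thesis .
qed

lemma l1_mat1: "l1 (mat 1) = 2"
  by (simp add: l1_def sum_2 mat_def)

definition KK :: "real \<Rightarrow> real \<Rightarrow> real" where
  "KK a p = max 1 (max (l1 (MA a p)) (l1 MB))"

lemma KK_ge1: "1 \<le> KK a p" by (simp add: KK_def)

lemma l1_alt: "l1 (alt a p f l) \<le> 2 * KK a p ^ l"
proof (induction l arbitrary: f)
  case 0
  then show ?case by (simp add: l1_mat1)
next
  case (Suc l)
  have "l1 (alt a p f (Suc l)) \<le> l1 (Mb a p f) * l1 (alt a p (\<not> f) l)"
    by (simp add: l1_mult)
  also have "\<dots> \<le> KK a p * (2 * KK a p ^ l)"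
  proof (rule mult_mono)
    show "l1 (Mb a p f) \<le> KK a p" by (simp add: Mb_def KK_def le_max_iff_disj)
  qed (use KK_ge1[of a p] in \<open>auto simp: l1_nonneg Suc.IH\<close>)
  finally show ?case by simp
qed

lemma frob_neg: "frob (- M) = frob M"
  by (simp add: frob_def)

lemma frob_le_l1: "frob M \<le> l1 M"
proof -
  have "frob M = sqrt ((cmod (M$1$1))\<^sup>2 + (cmod (M$1$2))\<^sup>2 + ((cmod (M$2$1))\<^sup>2 + (cmod (M$2$2))\<^sup>2))"
    by (simp add: frob_def sum_2)
  also have "\<dots> \<le> sqrt ((cmod (M$1$1) + cmod (M$1$2) + cmod (M$2$1) + cmod (M$2$2))\<^sup>2)"
    by (rule real_sqrt_le_mono) (simp add: power2_eq_square algebra_simps add_nonneg_nonneg)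
  also have "\<dots> = l1 M" by (simp add: l1_def sum_2 add.assoc)
  finally show ?thesis .
qed

lemma ab_le: "(x::real) * y \<le> (x^2 + y^2) / 2"
  using sum_squares_bound[of x y] by (simp add: field_simps)

lemma frob_sq: "(frob M)\<^sup>2 = (cmod (M$1$1))\<^sup>2 + (cmod (M$1$2))\<^sup>2 + ((cmod (M$2$1))\<^sup>2 + (cmod (M$2$2))\<^sup>2)"
proof -
  have "0 \<le> (cmod (M$1$1))\<^sup>2 + (cmod (M$1$2))\<^sup>2 + ((cmod (M$2$1))\<^sup>2 + (cmod (M$2$2))\<^sup>2)"
    by simp
  then show ?thesis unfolding frob_def sum_2 by (rule real_sqrt_pow2)
qed

lemma real_aux2:
  fixes a b c d F :: real
  assumes "1 \<le> a*d + b*c" "F = a^2 + b^2 + (c^2 + d^2)"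
  shows "1 \<le> F"
  using assms ab_le[of a d] ab_le[of b c] by argo

lemma frob_ge1:
  assumes "det M = 1" shows "1 \<le> frob M"
proof -
  have d: "M$1$1 * M$2$2 - M$1$2 * M$2$1 = 1" using assms by (simp add: det_2)
  have "1 = cmod (M$1$1 * M$2$2 - M$1$2 * M$2$1)" using d by simp
  also have "\<dots> \<le> cmod (M$1$1) * cmod (M$2$2) + cmod (M$1$2) * cmod (M$2$1)"
    using norm_triangle_ineq4[of "M$1$1 * M$2$2" "M$1$2 * M$2$1"] by (simp add: norm_mult)
  finally have 1: "1 \<le> cmod (M$1$1) * cmod (M$2$2) + cmod (M$1$2) * cmod (M$2$1)" .
  have "1 \<le> (frob M)\<^sup>2"
    by (rule real_aux2[OF 1 frob_sq])
  moreover have "0 \<le> frob M" by (simp add: frob_def sum_nonneg)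
  ultimately show ?thesis using power2_le_imp_le[of 1 "frob M"] by simp
qed

lemma detA: "det (MA a p) = 1"
proof -
  have h: "(cosh a)^2 - (sinh a)^2 = 1" by (simp add: cosh_square_eq)
  have h2: "complex_of_real (cosh a) * complex_of_real (cosh a) - complex_of_real (sinh a) * complex_of_real (sinh a) = 1"
    using arg_cong[OF h, of complex_of_real] by (simp add: power2_eq_square)
  show ?thesis unfolding det_2 MA_def using h2 cis_cnj[of p] by (auto simp: algebra_simps)
qed

lemma detB: "det MB = 1"
  unfolding det_2 MB_def by simp

lemma det_prodM: "det (prodM a p xs) = 1"
  by (induction xs) (auto simp: prodM_def det_mul detA detB det_I)

lemma frob_prodM: "frob (prodM a p xs) = frob (alt a p (fst (st xs)) (snd (st xs)))"
  using prodM_alt[of a p xs] by (auto simp: frob_neg)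

lemma ln_nonneg': "0 \<le> ln (frob (prodM a p xs))"
  using frob_ge1[OF det_prodM[of a p xs]] by simp

lemma ln_bound: "ln (frob (prodM a p xs)) \<le> ln 2 + real (len xs) * ln (KK a p)"
proof -
  have g: "1 \<le> frob (prodM a p xs)" using frob_ge1[OF det_prodM] by blast
  have "frob (prodM a p xs) \<le> 2 * KK a p ^ len xs"
    unfolding frob_prodM len_def using frob_le_l1 l1_alt order_trans by blast
  then have "ln (frob (prodM a p xs)) \<le> ln (2 * KK a p ^ len xs)"
    using g by (subst ln_le_cancel_iff) auto
  also have "\<dots> = ln 2 + real (len xs) * ln (KK a p)"
    using KK_ge1[of a p] by (simp add: ln_mult ln_realpow)
  finally show ?thesis .
qed

lemma len_amgm:
  assumes "0 < n" shows "real l \<le> (real l ^ 2 + real n) / (2 * sqrt (real n))"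
proof -
  have s: "sqrt (real n) ^ 2 = real n" using assms by simp
  have "0 \<le> (real l - sqrt (real n))^2" by simp
  then have "2 * real l * sqrt (real n) \<le> real l ^ 2 + real n"
    using s by (simp add: power2_eq_square algebra_simps)
  moreover have "0 < sqrt (real n)" using assms by simp
  ultimately show ?thesis by (simp add: field_simps)
qed

lemma sum_len_bound:
  assumes "0 < n"
  shows "(\<Sum>xs\<in>{xs::bool list. length xs = n}. real (len xs)) \<le> 2 ^ n * sqrt (real n)"
proof -
  have "(\<Sum>xs\<in>{xs::bool list. length xs = n}. real (len xs)) \<le>
      (\<Sum>xs\<in>{xs::bool list. length xs = n}. (real (len xs) ^ 2 + real n) / (2 * sqrt (real n)))"
    by (rule sum_mono) (rule len_amgm[OF assms])
  also have "\<dots> = ((\<Sum>xs\<in>{xs::bool list. length xs = n}. real (len xs) ^ 2) + 2 ^ n * real n) / (2 * sqrt (real n))"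
    by (simp add: sum_divide_distrib[symmetric] sum.distrib card_len)
  also have "\<dots> = real n * 2 ^ n / sqrt (real n)"
    by (simp add: sum_len_sq)
  also have "\<dots> = 2 ^ n * sqrt (real n)"
    using assms by (simp add: field_simps real_div_sqrt)
  finally show ?thesis .
qed

lemma Elog_nonneg: "0 \<le> Elog a p n"
  unfolding Elog_def by (intro divide_nonneg_pos sum_nonneg ln_nonneg') auto

lemma Elog_upper:
  assumes "0 < n" shows "Elog a p n \<le> ln 2 + ln (KK a p) * sqrt (real n)"
proof -
  have "(\<Sum>xs\<in>{xs::bool list. length xs = n}. ln (frob (prodM a p xs))) \<le>
      (\<Sum>xs\<in>{xs::bool list. length xs = n}. ln 2 + real (len xs) * ln (KK a p))"
    by (rule sum_mono) (rule ln_bound)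
  also have "\<dots> = 2 ^ n * ln 2 + ln (KK a p) * (\<Sum>xs\<in>{xs::bool list. length xs = n}. real (len xs))"
    by (simp add: sum.distrib card_len sum_distrib_left mult.commute)
  also have "\<dots> \<le> 2 ^ n * ln 2 + ln (KK a p) * (2 ^ n * sqrt (real n))"
    using sum_len_bound[OF assms] KK_ge1[of a p] by (intro add_left_mono mult_left_mono) auto
  finally have "(\<Sum>xs\<in>{xs::bool list. length xs = n}. ln (frob (prodM a p xs))) / 2 ^ n
      \<le> (2 ^ n * ln 2 + ln (KK a p) * (2 ^ n * sqrt (real n))) / 2 ^ n"
    by (simp add: divide_right_mono)
  also have "\<dots> = ln 2 + ln (KK a p) * sqrt (real n)" by (simp add: field_simps)
  finally show ?thesis unfolding Elog_def .
qed

theorem mainTheorem6: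
  fixes \<phi>h \<phi> :: real
  assumes "\<phi>h \<noteq> 0"
  shows "(\<lambda>n. Elog \<phi>h \<phi> n / real n) \<longlonglongrightarrow> 0"
proof (rule tendsto_sandwich[of "\<lambda>_. 0" _ _ "\<lambda>n. (ln 2 + ln (KK \<phi>h \<phi>) * sqrt (real n)) / real n"])
  show "\<forall>\<^sub>F n in sequentially. 0 \<le> Elog \<phi>h \<phi> n / real n"
    by (simp add: Elog_nonneg)
  show "\<forall>\<^sub>F n in sequentially. Elog \<phi>h \<phi> n / real n \<le> (ln 2 + ln (KK \<phi>h \<phi>) * sqrt (real n)) / real n"
    using eventually_gt_at_top[of 0]
    by eventually_elim (simp add: divide_right_mono Elog_upper)
  show "(\<lambda>_. 0::real) \<longlonglongrightarrow> 0" by simp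
  show "(\<lambda>n. (ln 2 + ln (KK \<phi>h \<phi>) * sqrt (real n)) / real n) \<longlonglongrightarrow> 0"
    by real_asymp
qed

end
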